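(* Suppose $G_n=([n],E_n)$ is generated from the graphon $W_n=\rho_nW$ and write $\bar W(x)=\int_0^1W(x,y)dy$. Then for all $t\in(0,1)$, $$\mathbb P\Big(\sup_{i\le n}\Big|\frac{|N(i)|}{n-1}-\rho_n\bar W(\omega_i)\Big|\ge\rho_nt\Big)\le2n\Big(e^{-\frac{(n-1)\rho_nt^2}{3}}+e^{-2(n-1)t^2}\Big).$$
   Context: Graphon model: $W:[0,1]^2\to[0,1]$ symmetric measurable, $\rho_n\in(0,1]$, latent $\omega_1,\dots,\omega_n$ i.i.d. Unif$[0,1]$, edges conditionally independent with probability $\rho_nW(\omega_i,\omega_j)$. $|N(i)|$ is the degree of vertex $i$. *)

theory Defs
  imports "HOL-Probability.Probability"
begin

text \<open>Sample space of the graphon model on vertex set {0..<n}: latent positions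
  omega_i, i < n, i.i.d. uniform on [0,1], and auxiliary uniforms U_(i,j), i < j < n,
  independent of everything; the edge {i,j} is present iff U_(i,j) < rho W(omega_i, omega_j).
  Conditionally on omega, the edges are independent with probability rho W(omega_i,omega_j).\<close>

definition graphon_space :: "nat \<Rightarrow> ((nat \<Rightarrow> real) \<times> (nat \<times> nat \<Rightarrow> real)) measure" where
  "graphon_space n =
     (PiM {..<n} (\<lambda>_. uniform_measure lborel {0..1::real}))
     \<Otimes>\<^sub>M (PiM {(i,j). i < j \<and> j < n} (\<lambda>_. uniform_measure lborel {0..1::real}))"

definition graphon_adj ::
  "real \<Rightarrow> (real \<Rightarrow> real \<Rightarrow> real) \<Rightarrow> (nat \<Rightarrow> real) \<times> (nat \<times> nat \<Rightarrow> real) \<Rightarrow> nat \<Rightarrow> nat \<Rightarrow> bool" where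
  "graphon_adj \<rho> W x i j \<longleftrightarrow>
     i \<noteq> j \<and> snd x (min i j, max i j) < \<rho> * W (fst x i) (fst x j)"

definition graphon_degree ::
  "nat \<Rightarrow> real \<Rightarrow> (real \<Rightarrow> real \<Rightarrow> real) \<Rightarrow> (nat \<Rightarrow> real) \<times> (nat \<times> nat \<Rightarrow> real) \<Rightarrow> nat \<Rightarrow> nat" where
  "graphon_degree n \<rho> W x i = card {j \<in> {..<n}. graphon_adj \<rho> W x i j}"

definition Wbar :: "(real \<Rightarrow> real \<Rightarrow> real) \<Rightarrow> real \<Rightarrow> real" where
  "Wbar W x = (LINT y:{0..1}|lborel. W x y)"

end

theory Submission imports Defs begin

abbreviation Unif :: "real measure" where "Unif \<equiv> uniform_measure lborel {0..1::real}"

lemma Unif_prob: "prob_space Unif"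
  by (rule prob_space_uniform_measure) auto




lemma emeasure_Unif: "A \<in> sets borel \<Longrightarrow> emeasure Unif A = emeasure lborel (A \<inter> {0..1})"
  by (subst emeasure_uniform_measure) (auto simp: Int_commute divide_ennreal_def)

lemma bern_int:
  fixes q s :: real
  assumes q: "0 \<le> q" "q \<le> 1"
  shows "(\<integral>\<^sup>+v. ennreal (exp (s * (if v < q then 1 else 0))) \<partial>Unif) = ennreal (1 + (exp s - 1) * q)"
proof -
  have eq: "\<And>v. ennreal (exp (s * (if v < q then 1 else 0))) = ennreal (exp s) * indicator {..<q} v + indicator {q..} v"
    by (auto split: split_indicator)
  have s1: "{..<q} \<inter> {0..1} = {0..<q}" using q by auto
  have s2: "{q..} \<inter> {0..1} = {q..1}" using q by auto
  have m1: "emeasure Unif {..<q} = ennreal q"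
    using q by (subst emeasure_Unif) (simp_all only: s1 emeasure_lborel_Ico, auto)
  have m2: "emeasure Unif {q..} = ennreal (1 - q)"
    using q by (subst emeasure_Unif) (simp_all only: s2 emeasure_lborel_Icc, auto)
  have "(\<integral>\<^sup>+v. ennreal (exp (s * (if v < q then 1 else 0))) \<partial>Unif)
     = (\<integral>\<^sup>+v. ennreal (exp s) * indicator {..<q} v \<partial>Unif) + (\<integral>\<^sup>+v. indicator {q..} v \<partial>Unif)"
    unfolding eq by (rule nn_integral_add) auto
  also have "\<dots> = ennreal (exp s) * ennreal q + ennreal (1 - q)"
    by (simp add: nn_integral_cmult_indicator m1 m2)
  also have "\<dots> = ennreal (1 + (exp s - 1) * q)"
    using q by (simp add: ennreal_mult''[symmetric] ennreal_plus[symmetric] algebra_simps del: ennreal_plus)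
  finally show ?thesis .
qed


lemma prod_PiM_reindex:
  fixes M :: "'b measure" and g :: "'j \<Rightarrow> 'k" and \<phi> :: "'j \<Rightarrow> 'b \<Rightarrow> ennreal"
  assumes M: "prob_space M" and finP: "finite P" and g: "inj_on g J" "g ` J \<subseteq> P"
    and \<phi>: "\<And>j. j \<in> J \<Longrightarrow> \<phi> j \<in> borel_measurable M"
  shows "(\<integral>\<^sup>+u. (\<Prod>j\<in>J. \<phi> j (u (g j))) \<partial>PiM P (\<lambda>_. M)) = (\<Prod>j\<in>J. integral\<^sup>N M (\<phi> j))"
proof -
  interpret product_prob_space "\<lambda>_. M"
    by (rule product_prob_spaceI) (rule M)
  interpret M: prob_space M by (rule M)
  define f where "f k = (if k \<in> g ` J then \<phi> (the_inv_into J g k) else (\<lambda>_. 1))" for k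
  have fJ: "f (g j) = \<phi> j" if "j \<in> J" for j
    using that g(1) by (simp add: f_def the_inv_into_f_f)
  have gen: "(\<Prod>k\<in>P. h (f k) k) = (\<Prod>j\<in>J. h (\<phi> j) (g j))"
    if h1: "\<And>k. h (\<lambda>_. 1) k = 1" for h :: "('b \<Rightarrow> ennreal) \<Rightarrow> 'k \<Rightarrow> ennreal"
  proof -
    have "(\<Prod>k\<in>P. h (f k) k) = (\<Prod>k\<in>g ` J. h (f k) k)"
      using finP g(2) by (intro prod.mono_neutral_right) (auto simp: f_def h1)
    also have "\<dots> = (\<Prod>j\<in>J. h (f (g j)) (g j))"
      using g(1) by (simp add: prod.reindex)
    also have "\<dots> = (\<Prod>j\<in>J. h (\<phi> j) (g j))"
      by (intro prod.cong) (auto simp: fJ)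
    finally show ?thesis .
  qed
  have "(\<integral>\<^sup>+u. (\<Prod>j\<in>J. \<phi> j (u (g j))) \<partial>PiM P (\<lambda>_. M)) = (\<integral>\<^sup>+u. (\<Prod>k\<in>P. f k (u k)) \<partial>PiM P (\<lambda>_. M))"
    using gen[of "\<lambda>F k. F (_ k)"] by simp
  also have "\<dots> = (\<Prod>k\<in>P. integral\<^sup>N M (f k))"
    using finP \<phi> by (intro product_nn_integral_prod) (auto simp: f_def the_inv_into_into[OF g(1)])
  also have "\<dots> = (\<Prod>j\<in>J. integral\<^sup>N M (\<phi> j))"
    using gen[of "\<lambda>F k. integral\<^sup>N M F"] by (simp add: M.emeasure_space_1)
  finally show ?thesis .
qed




lemma fst_meas: "i < n \<Longrightarrow> (\<lambda>x. fst x i) \<in> borel_measurable (graphon_space n)"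
proof -
  assume "i < n"
  then have [measurable]: "i \<in> {..<n}" by simp
  show ?thesis unfolding graphon_space_def
    by measurable
qed

lemma ln_lower:
  fixes t :: real assumes t: "0 \<le> t"
  shows "2 * t / (2 + t) \<le> ln (1 + t)"
proof -
  let ?g = "\<lambda>x::real. ln (1 + x) - 2 * x / (2 + x)"
  have "?g 0 \<le> ?g t"
  proof (rule DERIV_nonneg_imp_nondecreasing[OF t])
    fix x :: real assume x: "0 \<le> x" "x \<le> t"
    have d: "DERIV ?g x :> (1 / (1 + x) - 4 / (2 + x)^2)"
      using x by (auto intro!: derivative_eq_intros simp: field_simps power2_eq_square)
    have q: "4 * (1 + x) \<le> 1 * (2 + x)^2" by (simp add: power2_eq_square algebra_simps)
    have "4 / (2 + x)^2 \<le> 1 / (1 + x)"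
      using x q by (simp add: divide_simps)
    then have "0 \<le> 1 / (1 + x) - 4 / (2 + x)^2" by simp
    then show "\<exists>y. DERIV ?g x :> y \<and> 0 \<le> y" using d by blast
  qed
  then show ?thesis by simp
qed

lemma exp_neg_upper:
  fixes t :: real assumes t: "0 \<le> t"
  shows "exp (- t) \<le> 1 - t + t^2 / 2"
proof -
  let ?g = "\<lambda>x::real. 1 - x + x^2 / 2 - exp (- x)"
  have "?g 0 \<le> ?g t"
  proof (rule DERIV_nonneg_imp_nondecreasing[OF t])
    fix x :: real assume x: "0 \<le> x" "x \<le> t"
    have d: "DERIV ?g x :> (- 1 + x + exp (- x))"
      by (auto intro!: derivative_eq_intros simp: field_simps power2_eq_square)
    have "0 \<le> - 1 + x + exp (- x)" using exp_ge_add_one_self[of "-x"] by linarith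
    then show "\<exists>y. DERIV ?g x :> y \<and> 0 \<le> y" using d by blast
  qed
  then show ?thesis by simp
qed

lemma upper_exp:
  fixes t :: real assumes t: "0 \<le> t" "t \<le> 1"
  shows "exp (ln (1 + t)) - 1 - ln (1 + t) - ln (1 + t) * t \<le> - (t^2 / 3)"
proof -
  have l: "2 * t / (2 + t) \<le> ln (1 + t)" by (rule ln_lower) (use t in simp)
  have t3: "t^2 * t \<le> t^2 * 1" using t by (intro mult_left_mono) auto
  have "(t + t^2/3) * (2 + t) \<le> 2 * t * (1 + t)"
    using t3 by (simp add: algebra_simps power2_eq_square power3_eq_cube)
  then have "t + t^2/3 \<le> (2 * t * (1 + t)) / (2 + t)"
    using t by (subst pos_le_divide_eq) auto
  also have "\<dots> = (1 + t) * (2 * t / (2 + t))" by simp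
  also have "\<dots> \<le> (1 + t) * ln (1 + t)" using l t by (intro mult_left_mono) auto
  finally show ?thesis using t by (simp add: algebra_simps)
qed

lemma lower_exp:
  fixes t :: real assumes t: "0 \<le> t"
  shows "exp (- t) - 1 - (- t) - t * t \<le> - (t^2 / 3)"
proof -
  have "0 \<le> t * t" by simp
  moreover have "exp (- t) \<le> 1 - t + t * t / 2" using exp_neg_upper[OF t] by (simp add: power2_eq_square)
  ultimately show ?thesis unfolding power2_eq_square by linarith
qed

context
  fixes W :: "real \<Rightarrow> real \<Rightarrow> real"
  assumes W_meas: "(\<lambda>(x, y). W x y) \<in> borel_measurable borel"
    and W_range: "\<And>x y. x \<in> {0..1} \<Longrightarrow> y \<in> {0..1} \<Longrightarrow> W x y \<in> {0..1}"
begin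

lemma W_comp[measurable]:
  assumes [measurable]: "f \<in> borel_measurable M" "g \<in> borel_measurable M"
  shows "(\<lambda>x. W (f x) (g x)) \<in> borel_measurable M"
proof -
  have "(\<lambda>x. (f x, g x)) \<in> M \<rightarrow>\<^sub>M borel"
    unfolding borel_prod[symmetric] by measurable
  from measurable_comp[OF this W_meas] show ?thesis by (simp add: o_def)
qed

lemma int_ind_W: "a \<in> {0..1} \<Longrightarrow> integrable lborel (\<lambda>y. indicator {0..1} y * W a y)"
proof -
  assume a: "a \<in> {0..1}"
  have b: "\<And>y. y \<in> {0..1} \<Longrightarrow> \<bar>W a y\<bar> \<le> 1" using W_range[OF a] by fastforce
  show ?thesis
    by (rule integrableI_bounded_set[where A="{0..1}" and B=1]) (auto simp: b split: split_indicator intro!: AE_I2)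
qed

lemma int_ind: "integrable lborel (\<lambda>y. indicator {0..1::real} y :: real)"
  by (rule integrableI_bounded_set[where A="{0..1}" and B=1]) (auto split: split_indicator)

lemma Wbar_eq: "Wbar W a = (\<integral>y. indicator {0..1} y * W a y \<partial>lborel)"
  by (simp add: Wbar_def set_lebesgue_integral_def)

lemma Wbar_range: "a \<in> {0..1} \<Longrightarrow> Wbar W a \<in> {0..1}"
proof -
  assume a: "a \<in> {0..1}"
  have "0 \<le> (\<integral>y. indicator {0..1} y * W a y \<partial>lborel)"
    using a W_range by (intro integral_nonneg_AE) (auto split: split_indicator)
  moreover have "(\<integral>y. indicator {0..1} y * W a y \<partial>lborel) \<le> (\<integral>y. indicator {0..1::real} y \<partial>lborel)"
    using a W_range by (intro integral_mono int_ind_W int_ind) (auto split: split_indicator)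
  ultimately show ?thesis by (simp add: Wbar_eq)
qed

lemma y_int:
  fixes c \<rho> :: real
  assumes a: "a \<in> {0..1}" and c: "-1 \<le> c" and rho: "0 \<le> \<rho>" "\<rho> \<le> 1"
  shows "(\<integral>\<^sup>+y. ennreal (1 + c * \<rho> * W a y) \<partial>Unif) = ennreal (1 + c * \<rho> * Wbar W a)"
proof -
  have nn: "0 \<le> 1 + c * \<rho> * W a y" if "y \<in> {0..1}" for y
  proof -
    have "0 \<le> W a y" "W a y \<le> 1" using W_range[OF a that] by auto
    then have "0 \<le> \<rho> * W a y" "\<rho> * W a y \<le> 1" using rho by (auto intro: mult_le_one)
    then have "-1 \<le> c * (\<rho> * W a y)"
    proof (cases "c \<ge> 0")
      case False
      have "c * 1 \<le> c * (\<rho> * W a y)"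
        using False \<open>\<rho> * W a y \<le> 1\<close> by (intro mult_left_mono_neg) auto
      then show ?thesis using c by simp
    next
      case True
      then have "0 \<le> c * (\<rho> * W a y)" using \<open>0 \<le> \<rho> * W a y\<close> by simp
      then show ?thesis by simp
    qed
    then show ?thesis by (simp add: mult.assoc)
  qed
  have "(\<integral>\<^sup>+y. ennreal (1 + c * \<rho> * W a y) \<partial>Unif)
      = (\<integral>\<^sup>+y. ennreal (1 + c * \<rho> * W a y) * indicator {0..1} y \<partial>lborel) / emeasure lborel {0..1::real}"
    by (rule nn_integral_uniform_measure) auto
  also have "\<dots> = (\<integral>\<^sup>+y. ennreal (indicator {0..1} y + (c * \<rho>) * (indicator {0..1} y * W a y)) \<partial>lborel)"
    by (auto simp: divide_ennreal_def intro!: nn_integral_cong split: split_indicator)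
  also have "\<dots> = ennreal (\<integral>y. indicator {0..1} y + (c * \<rho>) * (indicator {0..1} y * W a y) \<partial>lborel)"
  proof (rule nn_integral_eq_integral)
    show "integrable lborel (\<lambda>y. indicator {0..1} y + (c * \<rho>) * (indicator {0..1} y * W a y))"
      using a by (intro Bochner_Integration.integrable_add integrable_mult_right int_ind int_ind_W)
  qed (use nn in \<open>auto split: split_indicator\<close>)
  also have "(\<integral>y. indicator {0..1} y + (c * \<rho>) * (indicator {0..1} y * W a y) \<partial>lborel) = 1 + c * \<rho> * Wbar W a"
    using a by (simp add: Wbar_eq int_ind int_ind_W)
  finally show ?thesis .
qed

lemma Wbar_comp[measurable]:
  assumes [measurable]: "f \<in> borel_measurable M"
  shows "(\<lambda>x. Wbar W (f x)) \<in> borel_measurable M"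
proof -
  have "(\<lambda>x. \<integral>y. indicator {0..1} y *\<^sub>R W x y \<partial>lborel) \<in> borel_measurable borel"
    apply (rule lborel.borel_measurable_lebesgue_integral)
    apply (simp add: case_prod_beta)
    apply measurable
    done
  then have "Wbar W \<in> borel_measurable borel"
    unfolding Wbar_def[abs_def] set_lebesgue_integral_def .
  from measurable_comp[OF assms this] show ?thesis by (simp add: o_def)
qed

lemma num_bound:
  fixes w \<rho> s :: real and k :: nat
  assumes w: "0 \<le> w" "w \<le> 1" and rho: "0 \<le> \<rho>" "\<rho> \<le> 1"
  shows "exp (- (s * real k * \<rho> * w)) * (1 + (exp s - 1) * \<rho> * w) ^ k \<le> exp (real k * \<rho> * (exp s - 1 - s))"
proof -
  define c where "c = exp s - 1"
  have cs: "0 \<le> c - s" using exp_ge_add_one_self[of s] unfolding c_def by linarith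
  have c1: "-1 \<le> c" unfolding c_def using exp_gt_zero[of s] by linarith
  have pw: "0 \<le> \<rho> * w" "\<rho> * w \<le> 1" using w rho by (auto intro: mult_le_one)
  have nn: "0 \<le> 1 + c * (\<rho> * w)"
  proof (cases "c \<ge> 0")
    case False
    have "c * 1 \<le> c * (\<rho> * w)" using False pw by (intro mult_left_mono_neg) auto
    then show ?thesis using c1 by simp
  qed (use pw in simp)
  have "(1 + c * (\<rho> * w)) ^ k \<le> exp (c * (\<rho> * w)) ^ k"
    using nn by (intro power_mono exp_ge_add_one_self) 
  also have "\<dots> = exp (real k * (c * (\<rho> * w)))" by (simp add: exp_of_nat_mult)
  finally have 1: "(1 + c * (\<rho> * w)) ^ k \<le> exp (real k * (c * (\<rho> * w)))" .
  have "exp (- (s * real k * \<rho> * w)) * (1 + c * (\<rho> * w)) ^ k \<le> exp (- (s * real k * \<rho> * w)) * exp (real k * (c * (\<rho> * w)))"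
    using 1 by (intro mult_left_mono) auto
  also have "\<dots> = exp ((real k * \<rho>) * w * (c - s))" by (simp add: exp_add[symmetric] algebra_simps)
  also have "\<dots> \<le> exp ((real k * \<rho>) * 1 * (c - s))"
    using w rho cs by (intro exp_mono mult_right_mono mult_left_mono) auto
  finally show ?thesis by (simp add: c_def mult.assoc)
qed

lemma mgf:
  fixes \<rho> s :: real and n i :: nat
  assumes rho: "0 < \<rho>" "\<rho> \<le> 1" and i: "i < n"
  shows "(\<integral>\<^sup>+x. ennreal (exp (s * real (graphon_degree n \<rho> W x i) - s * (real n - 1) * \<rho> * Wbar W (fst x i))) \<partial>graphon_space n)
     \<le> ennreal (exp ((real n - 1) * \<rho> * (exp s - 1 - s)))"
proof -
  define J where "J = {..<n} - {i}"
  define P where "P = {(a,b). a < b \<and> b < (n::nat)}"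
  define pr where "pr j = (min i j, max i j)" for j
  define c where "c = exp s - 1"
  define C where "C a = exp (- (s * (real n - 1) * \<rho> * Wbar W a))" for a
  let ?OM = "PiM {..<n} (\<lambda>_. Unif)"
  let ?UM = "PiM P (\<lambda>_. Unif)"
  have finJ: "finite J" and finP: "finite P"
    unfolding J_def P_def by (auto intro: finite_subset[of _ "{..<n} \<times> {..<n}"])
  have cardJ: "real (card J) = real n - 1"
    using i unfolding J_def by (simp add: of_nat_diff)
  have prP: "pr j \<in> P" if "j \<in> J" for j
    using that i unfolding J_def P_def pr_def by auto
  have inj: "inj_on pr J"
    unfolding J_def pr_def inj_on_def by (auto simp: min_def max_def split: if_splits)
  have gs: "graphon_space n = ?OM \<Otimes>\<^sub>M ?UM"
    unfolding graphon_space_def P_def ..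
  interpret UM: prob_space ?UM by (intro prob_space_PiM Unif_prob)
  interpret OMp: product_prob_space "\<lambda>_::nat. Unif" by (rule product_prob_spaceI) (rule Unif_prob)
  interpret UU: prob_space Unif by (rule Unif_prob)
  define G where "G x = ennreal (C (fst x i)) *
      (\<Prod>j\<in>J. ennreal (exp (s * (if snd x (pr j) < \<rho> * W (fst x i) (fst x j) then 1 else 0))))" for x
  have FG: "ennreal (exp (s * real (graphon_degree n \<rho> W x i) - s * (real n - 1) * \<rho> * Wbar W (fst x i))) = G x" for x
  proof -
    have "{j \<in> {..<n}. graphon_adj \<rho> W x i j} = {j \<in> J. snd x (pr j) < \<rho> * W (fst x i) (fst x j)}"
      unfolding J_def pr_def graphon_adj_def by auto
    then have "real (graphon_degree n \<rho> W x i) = (\<Sum>j\<in>J. if snd x (pr j) < \<rho> * W (fst x i) (fst x j) then 1 else 0)"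
      unfolding graphon_degree_def using finJ by (simp add: sum.If_cases Int_def)
    then have "exp (s * real (graphon_degree n \<rho> W x i) - s * (real n - 1) * \<rho> * Wbar W (fst x i))
        = C (fst x i) * (\<Prod>j\<in>J. exp (s * (if snd x (pr j) < \<rho> * W (fst x i) (fst x j) then 1 else 0)))"
      using finJ by (simp add: C_def exp_diff exp_sum[symmetric] sum_distrib_left divide_inverse exp_minus mult.commute)
    then show ?thesis
      unfolding G_def by (simp add: ennreal_mult'' prod_ennreal C_def prod_nonneg)
  qed
  have Gm: "G \<in> borel_measurable (?OM \<Otimes>\<^sub>M ?UM)"
  proof -
    have [measurable]: "(\<lambda>x. snd x (pr j)) \<in> borel_measurable (?OM \<Otimes>\<^sub>M ?UM)" if "j \<in> J" for j
      using prP[OF that] by measurable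
    have [measurable]: "(\<lambda>x. fst x j) \<in> borel_measurable (?OM \<Otimes>\<^sub>M ?UM)" if "j < n" for j
    proof -
      have "j \<in> {..<n}" using that by simp
      then show ?thesis by measurable
    qed
    have [measurable]: "(\<lambda>x. fst x i) \<in> borel_measurable (?OM \<Otimes>\<^sub>M ?UM)"
      using i by simp
    have tm: "(\<lambda>x. ennreal (exp (s * (if snd x (pr j) < \<rho> * W (fst x i) (fst x j) then 1 else 0))))
       \<in> borel_measurable (?OM \<Otimes>\<^sub>M ?UM)" if "j \<in> J" for j
    proof -
      have "j < n" using that by (simp add: J_def)
      note [measurable] = \<open>j \<in> J\<close> \<open>j < n\<close>
      show ?thesis by measurable
    qed
    show ?thesis unfolding G_def C_def
      apply (intro borel_measurable_times_ennreal borel_measurable_prod_ennreal)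
      subgoal using i by measurable
      subgoal by (rule tm)
      done
  qed
  define H where "H om = ennreal (C (om i)) * (\<Prod>j\<in>J. ennreal (1 + c * \<rho> * W (om i) (om j)))" for om :: "nat \<Rightarrow> real"
  define B where "B = exp ((real n - 1) * \<rho> * (exp s - 1 - s))"
  have s1: "(\<integral>\<^sup>+x. ennreal (exp (s * real (graphon_degree n \<rho> W x i) - s * (real n - 1) * \<rho> * Wbar W (fst x i))) \<partial>graphon_space n)
      = (\<integral>\<^sup>+om. (\<integral>\<^sup>+u. G (om, u) \<partial>?UM) \<partial>?OM)"
    unfolding FG gs by (rule UM.nn_integral_fst[OF Gm, symmetric])
  have inner: "(\<integral>\<^sup>+u. G (om, u) \<partial>?UM) = H om" if om: "\<forall>k\<in>{..<n}. om k \<in> {0..1}" for om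
  proof -
    define \<phi> where "\<phi> j v = ennreal (exp (s * (if v < \<rho> * W (om i) (om j) then 1 else 0)))" for j v
    have \<phi>m: "\<phi> j \<in> borel_measurable Unif" for j
      unfolding \<phi>_def by measurable
    have "(\<integral>\<^sup>+u. G (om, u) \<partial>?UM) = (\<integral>\<^sup>+u. ennreal (C (om i)) * (\<Prod>j\<in>J. \<phi> j (u (pr j))) \<partial>?UM)"
      unfolding G_def \<phi>_def by simp
    also have "\<dots> = ennreal (C (om i)) * (\<integral>\<^sup>+u. (\<Prod>j\<in>J. \<phi> j (u (pr j))) \<partial>?UM)"
    proof (rule nn_integral_cmult)
      have [measurable]: "(\<lambda>u. \<phi> j (u (pr j))) \<in> borel_measurable ?UM" if "j \<in> J" for j
      proof -
        note [measurable] = prP[OF that] \<phi>m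
        show ?thesis by measurable
      qed
      show "(\<lambda>u. \<Prod>j\<in>J. \<phi> j (u (pr j))) \<in> borel_measurable ?UM"
        by (intro borel_measurable_prod_ennreal) simp
    qed
    also have "(\<integral>\<^sup>+u. (\<Prod>j\<in>J. \<phi> j (u (pr j))) \<partial>?UM) = (\<Prod>j\<in>J. integral\<^sup>N Unif (\<phi> j))"
      using prP by (intro prod_PiM_reindex Unif_prob finP inj \<phi>m) auto
    also have "\<dots> = (\<Prod>j\<in>J. ennreal (1 + c * \<rho> * W (om i) (om j)))"
    proof (intro prod.cong refl)
      fix j assume j: "j \<in> J"
      have wr: "W (om i) (om j) \<in> {0..1}"
        using om i j by (intro W_range) (auto simp: J_def)
      then have "0 \<le> \<rho> * W (om i) (om j)" "\<rho> * W (om i) (om j) \<le> 1"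
        using rho by (auto intro: mult_le_one)
      then show "integral\<^sup>N Unif (\<phi> j) = ennreal (1 + c * \<rho> * W (om i) (om j))"
        unfolding \<phi>_def c_def by (subst bern_int) (auto simp: mult.assoc)
    qed
    finally show ?thesis unfolding H_def .
  qed
  have AE: "AE om in ?OM. \<forall>k\<in>{..<n}. om k \<in> {0..1}"
  proof (intro AE_finite_allI)
    fix k assume k: "k \<in> {..<n}"
    have u: "AE x in Unif. x \<in> {0..1}" by (intro AE_uniform_measureI AE_I2) auto
    show "AE om in ?OM. om k \<in> {0..1}"
      by (rule AE_PiM_component[where P="\<lambda>x. x \<in> {0..1}", OF Unif_prob k u])
  qed simp
  have s2: "(\<integral>\<^sup>+om. (\<integral>\<^sup>+u. G (om, u) \<partial>?UM) \<partial>?OM) = (\<integral>\<^sup>+om. H om \<partial>?OM)"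
    using AE by (intro nn_integral_cong_AE) (auto elim!: AE_mp simp: inner)
  have nJ: "{..<n} = insert i J" "i \<notin> J" using i by (auto simp: J_def)
  have Hm: "H \<in> borel_measurable (PiM (insert i J) (\<lambda>_. Unif))"
  proof -
    have [measurable]: "i \<in> insert i J" by simp
    have tm: "(\<lambda>om. ennreal (1 + c * \<rho> * W (om i) (om j))) \<in> borel_measurable (PiM (insert i J) (\<lambda>_. Unif))"
      if "j \<in> J" for j
    proof -
      have [measurable]: "j \<in> insert i J" using that by simp
      show ?thesis by measurable
    qed
    show ?thesis unfolding H_def C_def
      apply (intro borel_measurable_times_ennreal borel_measurable_prod_ennreal)
      subgoal by measurable
      subgoal by (rule tm)
      done
  qed
  have s3: "(\<integral>\<^sup>+om. H om \<partial>?OM) = (\<integral>\<^sup>+a. (\<integral>\<^sup>+om. H (om(i := a)) \<partial>PiM J (\<lambda>_. Unif)) \<partial>Unif)"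
    unfolding nJ(1) by (rule OMp.product_nn_integral_insert_rev[OF finJ nJ(2) Hm])
  have s4: "(\<integral>\<^sup>+om. H (om(i := a)) \<partial>PiM J (\<lambda>_. Unif))
      = ennreal (C a) * (\<Prod>j\<in>J. (\<integral>\<^sup>+y. ennreal (1 + c * \<rho> * W a y) \<partial>Unif))" for a
  proof -
    have "(\<integral>\<^sup>+om. H (om(i := a)) \<partial>PiM J (\<lambda>_. Unif))
       = (\<integral>\<^sup>+om. ennreal (C a) * (\<Prod>j\<in>J. ennreal (1 + c * \<rho> * W a (om (id j)))) \<partial>PiM J (\<lambda>_. Unif))"
      using nJ(2) unfolding H_def
      by (intro nn_integral_cong arg_cong2[where f="(*)"] prod.cong) auto
    also have "\<dots> = ennreal (C a) * (\<integral>\<^sup>+om. (\<Prod>j\<in>J. ennreal (1 + c * \<rho> * W a (om (id j)))) \<partial>PiM J (\<lambda>_. Unif))"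
    proof (rule nn_integral_cmult)
      have [measurable]: "(\<lambda>om. ennreal (1 + c * \<rho> * W a (om (id j)))) \<in> borel_measurable (PiM J (\<lambda>_. Unif))"
        if "j \<in> J" for j
      proof -
        have [measurable]: "id j \<in> J" using that by simp
        show ?thesis by measurable
      qed
      show "(\<lambda>om. \<Prod>j\<in>J. ennreal (1 + c * \<rho> * W a (om (id j)))) \<in> borel_measurable (PiM J (\<lambda>_. Unif))"
        by (intro borel_measurable_prod_ennreal) simp
    qed
    also have "(\<integral>\<^sup>+om. (\<Prod>j\<in>J. ennreal (1 + c * \<rho> * W a (om (id j)))) \<partial>PiM J (\<lambda>_. Unif))
        = (\<Prod>j\<in>J. (\<integral>\<^sup>+y. ennreal (1 + c * \<rho> * W a y) \<partial>Unif))"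
      by (rule prod_PiM_reindex[OF Unif_prob finJ]) auto
    finally show ?thesis .
  qed
  have s5: "ennreal (C a) * (\<Prod>j\<in>J. (\<integral>\<^sup>+y. ennreal (1 + c * \<rho> * W a y) \<partial>Unif)) \<le> ennreal B"
    if a: "a \<in> {0..1}" for a
  proof -
    have c1: "-1 \<le> c" unfolding c_def using exp_gt_zero[of s] by linarith
    have wb: "0 \<le> Wbar W a" "Wbar W a \<le> 1" using Wbar_range[OF a] by auto
    have nn: "0 \<le> 1 + c * \<rho> * Wbar W a"
    proof (cases "c \<ge> 0")
      case False
      have pw: "0 \<le> \<rho> * Wbar W a" "\<rho> * Wbar W a \<le> 1" using wb rho by (auto intro: mult_le_one)
      have "c * 1 \<le> c * (\<rho> * Wbar W a)" using False pw by (intro mult_left_mono_neg) auto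
      then show ?thesis using c1 by (simp add: mult.assoc)
    qed (use wb rho in simp)
    have "ennreal (C a) * (\<Prod>j\<in>J. (\<integral>\<^sup>+y. ennreal (1 + c * \<rho> * W a y) \<partial>Unif))
        = ennreal (C a) * (\<Prod>j\<in>J. ennreal (1 + c * \<rho> * Wbar W a))"
      using a c1 rho by (simp add: y_int)
    also have "\<dots> = ennreal (C a * (1 + c * \<rho> * Wbar W a) ^ card J)"
      using nn by (simp add: ennreal_mult'' ennreal_power C_def)
    also have "\<dots> \<le> ennreal B"
    proof (rule ennreal_leI)
      have "C a * (1 + c * \<rho> * Wbar W a) ^ card J
          = exp (- (s * real (card J) * \<rho> * Wbar W a)) * (1 + (exp s - 1) * \<rho> * Wbar W a) ^ card J"
        unfolding C_def c_def cardJ ..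
      also have "\<dots> \<le> exp (real (card J) * \<rho> * (exp s - 1 - s))"
        using wb rho by (intro num_bound) auto
      finally show "C a * (1 + c * \<rho> * Wbar W a) ^ card J \<le> B"
        unfolding B_def cardJ .
    qed
    finally show ?thesis .
  qed
  have "(\<integral>\<^sup>+a. (\<integral>\<^sup>+om. H (om(i := a)) \<partial>PiM J (\<lambda>_. Unif)) \<partial>Unif) \<le> (\<integral>\<^sup>+a. ennreal B \<partial>Unif)"
  proof (rule nn_integral_mono_AE)
    have "AE a in Unif. a \<in> {0..1}" by (intro AE_uniform_measureI AE_I2) auto
    then show "AE a in Unif. (\<integral>\<^sup>+om. H (om(i := a)) \<partial>PiM J (\<lambda>_. Unif)) \<le> ennreal B"
      by (rule AE_mp) (rule AE_I2, unfold s4, intro impI s5, assumption)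
  qed
  also have "\<dots> = ennreal B" by (simp add: prob_space.emeasure_space_1[OF Unif_prob])
  finally show ?thesis unfolding s1 s2 s3 B_def .
qed

lemma degree_meas:
  fixes \<rho> :: real and n i :: nat
  assumes i: "i < n"
  shows "(\<lambda>x. real (graphon_degree n \<rho> W x i)) \<in> borel_measurable (graphon_space n)"
proof -
  define J where "J = {..<n} - {i}"
  define P where "P = {(a,b). a < b \<and> b < (n::nat)}"
  let ?OM = "PiM {..<n} (\<lambda>_. Unif)"
  let ?UM = "PiM P (\<lambda>_. Unif)"
  have gs: "graphon_space n = ?OM \<Otimes>\<^sub>M ?UM"
    unfolding graphon_space_def P_def ..
  have finJ: "finite J" unfolding J_def by auto
  have eq: "real (graphon_degree n \<rho> W x i) = (\<Sum>j\<in>J. if snd x (min i j, max i j) < \<rho> * W (fst x i) (fst x j) then 1 else 0)" for x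
  proof -
    have "{j \<in> {..<n}. graphon_adj \<rho> W x i j} = {j \<in> J. snd x (min i j, max i j) < \<rho> * W (fst x i) (fst x j)}"
      unfolding J_def graphon_adj_def by auto
    then show ?thesis
      unfolding graphon_degree_def using finJ by (simp add: sum.If_cases Int_def)
  qed
  have tm: "(\<lambda>x. if snd x (min i j, max i j) < \<rho> * W (fst x i) (fst x j) then 1 else 0 :: real)
       \<in> borel_measurable (?OM \<Otimes>\<^sub>M ?UM)" if "j \<in> J" for j
  proof -
    have "j < n" using that by (simp add: J_def)
    have [measurable]: "(min i j, max i j) \<in> P" using that i unfolding J_def P_def by auto
    note [measurable] = \<open>j < n\<close> i
    have [measurable]: "(\<lambda>x. fst x j) \<in> borel_measurable (?OM \<Otimes>\<^sub>M ?UM)"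
    proof -
      have "j \<in> {..<n}" using \<open>j < n\<close> by simp
      then show ?thesis by measurable
    qed
    have [measurable]: "(\<lambda>x. fst x i) \<in> borel_measurable (?OM \<Otimes>\<^sub>M ?UM)"
    proof -
      have "i \<in> {..<n}" using i by simp
      then show ?thesis by measurable
    qed
    show ?thesis by measurable
  qed
  show ?thesis unfolding eq gs
    by (intro borel_measurable_sum tm)
qed

end



lemma ennexp_meas: "h \<in> borel_measurable M \<Longrightarrow> (\<lambda>x. ennreal (exp (h x))) \<in> borel_measurable M"
  by (rule measurable_compose[OF _ measurable_compose[OF borel_measurable_exp measurable_ennreal]])

theorem lemmaC1:
  fixes W :: "real \<Rightarrow> real \<Rightarrow> real" and \<rho> t :: real and n :: nat
  assumes W_meas: "(\<lambda>(x, y). W x y) \<in> borel_measurable borel"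
    and W_sym: "\<And>x y. x \<in> {0..1} \<Longrightarrow> y \<in> {0..1} \<Longrightarrow> W x y = W y x"
    and W_range: "\<And>x y. x \<in> {0..1} \<Longrightarrow> y \<in> {0..1} \<Longrightarrow> W x y \<in> {0..1}"
    and rho: "0 < \<rho>" "\<rho> \<le> 1"
    and t: "0 < t" "t < 1"
    and n: "n \<ge> 1"
  shows "measure (graphon_space n)
           {x \<in> space (graphon_space n).
              (MAX i\<in>{..<n}. \<bar>real (graphon_degree n \<rho> W x i) / (real n - 1)
                                - \<rho> * Wbar W (fst x i)\<bar>) \<ge> \<rho> * t}
         \<le> 2 * real n * (exp (- ((real n - 1) * \<rho> * t\<^sup>2 / 3)) + exp (- (2 * (real n - 1) * t\<^sup>2)))"
    (is "measure ?M ?A \<le> ?R")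
proof -
  have Mprob: "prob_space ?M"
    unfolding graphon_space_def by (intro prob_space_pair prob_space_PiM Unif_prob)
  interpret M: prob_space ?M by (rule Mprob)
  define e1 where "e1 = exp (- ((real n - 1) * \<rho> * t\<^sup>2 / 3))"
  define e2 where "e2 = exp (- (2 * (real n - 1) * t\<^sup>2))"
  have e1: "0 \<le> e1" and e2: "0 \<le> e2" by (auto simp: e1_def e2_def)
  show ?thesis
  proof (cases "n = 1")
    case True
    have "measure ?M ?A \<le> 1" by (rule M.prob_le_1)
    also have "\<dots> \<le> ?R" using True by simp
    finally show ?thesis .
  next
    case False
    with n have n2: "n \<ge> 2" by simp
    define m where "m = real n - 1"
    have m: "0 < m" using n2 by (simp add: m_def)
    define l where "l = ln (1 + t)"
    have l: "0 \<le> l" using t by (simp add: l_def)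
    define D where "D i x = real (graphon_degree n \<rho> W x i)" for i x
    define Wb where "Wb (i::nat) (x::(nat \<Rightarrow> real) \<times> (nat \<times> nat \<Rightarrow> real)) = Wbar W (fst x i)" for i x
    define fp where "fp i x = ennreal (exp (l * D i x - l * m * \<rho> * Wb i x)) * ennreal (exp (- (l * m * \<rho> * t)))" for i x
    define fm where "fm i x = ennreal (exp ((- t) * D i x - (- t) * m * \<rho> * Wb i x)) * ennreal (exp (- (t * m * \<rho> * t)))" for i x
    define F where "F x = (\<Sum>i<n. fp i x + fm i x)" for x
    have dm: "(\<lambda>x. D i x) \<in> borel_measurable ?M" if "i < n" for i
      unfolding D_def by (rule degree_meas[OF W_meas W_range that])
    have wm: "(\<lambda>x. Wb i x) \<in> borel_measurable ?M" if "i < n" for i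
      unfolding Wb_def using that by (intro Wbar_comp[OF W_meas W_range] fst_meas)
    have lin: "(\<lambda>x. a * D i x - b * Wb i x) \<in> borel_measurable ?M" if "i < n" for i a b
      using that by (intro borel_measurable_diff borel_measurable_times borel_measurable_const dm wm)
    have meas_fp: "fp i \<in> borel_measurable ?M" "fm i \<in> borel_measurable ?M" if "i < n" for i
      unfolding fp_def fm_def using that
      by (intro borel_measurable_times_ennreal ennexp_meas lin borel_measurable_const; assumption)+
    have cover: "1 \<le> F x" if x: "x \<in> ?A" for x
    proof -
      have ne: "{..<n} \<noteq> {}" using n by (simp add: lessThan_empty_iff)
      let ?f = "\<lambda>i. \<bar>real (graphon_degree n \<rho> W x i) / (real n - 1) - \<rho> * Wbar W (fst x i)\<bar>"
      have "Max (?f ` {..<n}) \<in> ?f ` {..<n}" by (rule Max_in) (use ne in auto)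
      then obtain i where i: "i < n" and iM: "Max (?f ` {..<n}) = ?f i" by auto
      have dev: "\<rho> * t \<le> \<bar>D i x / m - \<rho> * Wb i x\<bar>"
        using x iM by (simp add: D_def Wb_def m_def)
      have "D i x / m - \<rho> * Wb i x = (D i x - m * \<rho> * Wb i x) / m" using m by (simp add: field_simps)
      then have dev2: "m * (\<rho> * t) \<le> \<bar>D i x - m * \<rho> * Wb i x\<bar>"
        using dev m by (simp add: abs_div pos_le_divide_eq mult.commute)
      have "1 \<le> fp i x + fm i x"
      proof (cases "D i x - m * \<rho> * Wb i x \<ge> 0")
        case True
        then have "m * (\<rho> * t) \<le> D i x - m * \<rho> * Wb i x" using dev2 by simp
        then have "l * (m * (\<rho> * t)) \<le> l * (D i x - m * \<rho> * Wb i x)" using l by (intro mult_left_mono)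
        then have "0 \<le> l * D i x - l * m * \<rho> * Wb i x + - (l * m * \<rho> * t)" by (simp add: algebra_simps)
        then have "1 \<le> exp (l * D i x - l * m * \<rho> * Wb i x + - (l * m * \<rho> * t))" by simp
        then have "1 \<le> fp i x" unfolding fp_def by (simp add: ennreal_mult''[symmetric] exp_add[symmetric] del: exp_add)
        then show ?thesis by (rule order_trans) simp
      next
        case False
        then have "m * (\<rho> * t) \<le> - (D i x - m * \<rho> * Wb i x)" using dev2 by simp
        then have "t * (m * (\<rho> * t)) \<le> t * (- (D i x - m * \<rho> * Wb i x))" using t by (intro mult_left_mono) auto
        then have "0 \<le> (- t) * D i x - (- t) * m * \<rho> * Wb i x + - (t * m * \<rho> * t)" by (simp add: algebra_simps)
        then have "1 \<le> exp ((- t) * D i x - (- t) * m * \<rho> * Wb i x + - (t * m * \<rho> * t))" by simp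
        then have "1 \<le> fm i x" unfolding fm_def by (simp add: ennreal_mult''[symmetric] exp_add[symmetric] del: exp_add)
        then show ?thesis by (rule order_trans) simp
      qed
      also have "\<dots> \<le> F x" unfolding F_def using i by (intro member_le_sum) auto
      finally show ?thesis .
    qed
    have Fm: "F \<in> borel_measurable ?M" unfolding F_def
      using meas_fp by (intro borel_measurable_sum borel_measurable_add) auto
    have "emeasure ?M ?A \<le> integral\<^sup>N ?M F"
    proof (cases "?A \<in> sets ?M")
      case True
      have ind: "indicator ?A x \<le> F x" for x
      proof (cases "x \<in> ?A")
        case True
        then have "indicator ?A x = (1::ennreal)" by (rule indicator_simps(1))
        then show ?thesis using cover[OF True] by (simp only:)
      next
        case False
        then have "indicator ?A x = (0::ennreal)" by (rule indicator_simps(2))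
        then show ?thesis by (simp only:) simp
      qed
      have "emeasure ?M ?A = (\<integral>\<^sup>+x. indicator ?A x \<partial>?M)" by (rule nn_integral_indicator[symmetric, OF True])
      also have "\<dots> \<le> integral\<^sup>N ?M F"
        by (intro nn_integral_mono ind)
      finally show ?thesis .
    next
      case False
      have "emeasure ?M ?A = 0" by (rule emeasure_notin_sets[OF False])
      then show ?thesis by (simp only:) (rule zero_le)
    qed
    also have "integral\<^sup>N ?M F = (\<Sum>i<n. (\<integral>\<^sup>+x. fp i x + fm i x \<partial>?M))"
      unfolding F_def by (rule nn_integral_sum) (auto intro!: borel_measurable_add meas_fp)
    also have "\<dots> = (\<Sum>i<n. integral\<^sup>N ?M (fp i) + integral\<^sup>N ?M (fm i))"
      by (intro sum.cong refl nn_integral_add) (auto intro: meas_fp)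
    also have "\<dots> \<le> (\<Sum>i<n. ennreal e1 + ennreal e1)"
    proof (intro sum_mono add_mono)
      fix i assume "i \<in> {..<n}"
      then have i: "i < n" by simp
      have mgf_meas: "(\<lambda>x. ennreal (exp (s * D i x - s * m * \<rho> * Wb i x))) \<in> borel_measurable ?M" for s
        by (rule ennexp_meas[OF lin[OF i]])
      have mg: "integral\<^sup>N ?M (\<lambda>x. ennreal (exp (s * D i x - s * m * \<rho> * Wb i x))) \<le> ennreal (exp (m * \<rho> * (exp s - 1 - s)))" for s
        using mgf[OF W_meas W_range rho i, of s] unfolding D_def Wb_def m_def .
      show "integral\<^sup>N ?M (fp i) \<le> ennreal e1"
      proof -
        have "integral\<^sup>N ?M (fp i) = integral\<^sup>N ?M (\<lambda>x. ennreal (exp (l * D i x - l * m * \<rho> * Wb i x))) * ennreal (exp (- (l * m * \<rho> * t)))"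
          unfolding fp_def by (rule nn_integral_multc[OF mgf_meas])
        also have "\<dots> \<le> ennreal (exp (m * \<rho> * (exp l - 1 - l))) * ennreal (exp (- (l * m * \<rho> * t)))"
          by (intro mult_right_mono mg) simp
        also have "\<dots> = ennreal (exp ((m * \<rho>) * (exp l - 1 - l - l * t)))"
          by (simp add: ennreal_mult''[symmetric] exp_add[symmetric] algebra_simps del: exp_add)
        also have "\<dots> \<le> ennreal e1"
        proof (intro ennreal_leI)
          have "(m * \<rho>) * (exp l - 1 - l - l * t) \<le> (m * \<rho>) * (- (t^2 / 3))"
            using upper_exp[of t] t m rho unfolding l_def by (intro mult_left_mono) auto
          then show "exp ((m * \<rho>) * (exp l - 1 - l - l * t)) \<le> e1"
            unfolding e1_def m_def by simp
        qed
        finally show ?thesis .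
      qed
      show "integral\<^sup>N ?M (fm i) \<le> ennreal e1"
      proof -
        have "integral\<^sup>N ?M (fm i) = integral\<^sup>N ?M (\<lambda>x. ennreal (exp ((- t) * D i x - (- t) * m * \<rho> * Wb i x))) * ennreal (exp (- (t * m * \<rho> * t)))"
          unfolding fm_def by (rule nn_integral_multc[OF mgf_meas])
        also have "\<dots> \<le> ennreal (exp (m * \<rho> * (exp (- t) - 1 - (- t)))) * ennreal (exp (- (t * m * \<rho> * t)))"
          by (intro mult_right_mono mg) simp
        also have "\<dots> = ennreal (exp ((m * \<rho>) * (exp (- t) - 1 - (- t) - t * t)))"
          by (simp add: ennreal_mult''[symmetric] exp_add[symmetric] algebra_simps del: exp_add)
        also have "\<dots> \<le> ennreal e1"
        proof (intro ennreal_leI)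
          have "(m * \<rho>) * (exp (- t) - 1 - (- t) - t * t) \<le> (m * \<rho>) * (- (t^2 / 3))"
            using lower_exp[of t] t m rho by (intro mult_left_mono) auto
          then show "exp ((m * \<rho>) * (exp (- t) - 1 - (- t) - t * t)) \<le> e1"
            unfolding e1_def m_def by simp
        qed
        finally show ?thesis .
      qed
    qed
    also have "\<dots> = ennreal (2 * real n * e1)"
    proof -
      have "ennreal e1 + ennreal e1 = ennreal (e1 + e1)" by (rule ennreal_plus[symmetric, OF e1 e1])
      then have "(\<Sum>i<n. ennreal e1 + ennreal e1) = (\<Sum>i<n. ennreal (e1 + e1))" by (simp only:)
      also have "\<dots> = ennreal (\<Sum>i<n. e1 + e1)" using e1 by (intro sum_ennreal) auto
      also have "(\<Sum>i<n. e1 + e1) = 2 * real n * e1" by simp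
      finally show ?thesis .
    qed
    finally have "emeasure ?M ?A \<le> ennreal (2 * real n * e1)" .
    then have "measure ?M ?A \<le> 2 * real n * e1"
      unfolding measure_def using e1 by (intro enn2real_leI) auto
    also have "\<dots> \<le> ?R" using e2 unfolding e1_def[symmetric] e2_def[symmetric] by (simp add: algebra_simps)
    finally show ?thesis .
  qed
qed

end
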